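(* Let $S\subset\mathbb{R}^n$ and $U_0\subset\mathbb{R}^{n\times n}$ be polyhedra (a safety region and an initial uncertainty set) and let $A_\star\in U_0$ be the unknown true matrix. Then one-step safe learning is possible if and only if the One-Step Safe Learning Algorithm described below, run with an arbitrary choice of cost vector $c\in\mathbb{R}^n$ and an arbitrary constant $\varepsilon\in(0,1]$, returns a matrix (rather than declaring that one-step safe learning is impossible).
   Context: System: $x_{t+1}=A_\star x_t$ with $A_\star$ unknown, $A_\star\in U_0$. Given measurements $(x_j,y_j)$, $j=1,\dots,k$, with $y_j=A_\star x_j$, let $U_k=\{A\in U_0\mid Ax_j=y_j,\ j=1,\dots,k\}$ and let $S^1_k=\{x\in S\mid Ax\in S\ \forall A\in U_k\}$ (the set of points that are one-step safe under all matrices consistent with the data). Definition (one-step safe learning). One-step safe learning is possible if for some nonnegative integer $m$ one can sequentially choose vectors $x_k\in S$, $k=1,\dots,m$ (each choice may depend on the previous observations), observing $y_k=A_\star x_k$ after each choice, such that (1) (safety) for $k=1,\dots,m$, $Ax_k\in S$ for all $A\in U_{k-1}$, and (2) (learning) $U_m$ is a singleton. One-Step Safe Learning Algorithm (input $S,U_0,c,\varepsilon$). For $k=0,1,\dots,n-1$: (a) if $U_k$ is a singleton, return its unique element; (b) let $x_k^\star$ be an optimal solution of $\min\{c^Tx \mid x\in S^1_k\}$ (a linear program); (c) if $x_k^\star$ is linearly independent from $\{x_1,\dots,x_k\}$, set $x_{k+1}=x_k^\star$; otherwise compute a basis $B_k\subset S^1_k$ of $\mathrm{span}(S^1_k)$,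 and if some $z\in B_k$ is linearly independent from $\{x_1,\dots,x_k\}$, set $x_{k+1}=(1-\varepsilon)x_k^\star+\varepsilon z$ for the first such $z$, while if no element of $B_k$ is linearly independent from $\{x_1,\dots,x_k\}$, stop and declare that one-step safe learning is impossible; (d) observe $y_{k+1}=A_\star x_{k+1}$. If the loop completes, let $X=[x_1,\dots,x_n]$, $Y=[y_1,\dots,y_n]$ and return $YX^{-1}$. *)

theory Defs
  imports "HOL-Analysis.Analysis"
begin

text \<open>State space R^n is modelled as real^'n (n = CARD('n)), matrices as real^'n^'n.\<close>

definition Uset :: "(real^'n^'n) set \<Rightarrow> real^'n^'n \<Rightarrow> (real^'n) list \<Rightarrow> (real^'n^'n) set" where
  "Uset U0 Astar xs = {A \<in> U0. \<forall>j < length xs. A *v (xs ! j) = Astar *v (xs ! j)}"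

definition S1 :: "(real^'n) set \<Rightarrow> (real^'n^'n) set \<Rightarrow> (real^'n) set" where
  "S1 S U = {x \<in> S. \<forall>A \<in> U. A *v x \<in> S}"

definition one_step_safe_learnable ::
  "(real^'n) set \<Rightarrow> (real^'n^'n) set \<Rightarrow> real^'n^'n \<Rightarrow> bool" where
  "one_step_safe_learnable S U0 Astar \<longleftrightarrow>
     (\<exists>xs :: (real^'n) list.
        (\<forall>k < length xs. xs ! k \<in> S \<and>
            (\<forall>A \<in> Uset U0 Astar (take k xs). A *v (xs ! k) \<in> S)) \<and>
        (\<exists>A. Uset U0 Astar xs = {A}))"

definition lp_opt :: "real^'n \<Rightarrow> (real^'n) set \<Rightarrow> real^'n \<Rightarrow> bool" where
  "lp_opt c P x \<longleftrightarrow> x \<in> P \<and> (\<forall>y \<in> P. c \<bullet> x \<le> c \<bullet> y)"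

definition basis_list_of :: "(real^'n) set \<Rightarrow> (real^'n) list \<Rightarrow> bool" where
  "basis_list_of P B \<longleftrightarrow> distinct B \<and> set B \<subseteq> P \<and> independent (set B) \<and> span (set B) = span P"

datatype 'm alg_outcome = Returns 'm | Impossible

text \<open>Matrix X whose columns are the vectors of the list xs (length n), in a fixed
  enumeration of the index type; Y X^{-1} does not depend on this enumeration.\<close>
definition col_idx :: "'n::finite \<Rightarrow> nat" where
  "col_idx = (SOME f. bij_betw f (UNIV :: 'n set) {..<CARD('n)})"

definition colmat :: "(real^'n) list \<Rightarrow> real^'n^'n" where
  "colmat xs = (\<chi> i j. (xs ! col_idx j) $ i)"

text \<open>Runs of the One-Step Safe Learning Algorithm with inputs S, U0, c, eps against the
  true matrix Astar.  alg_run ... xs out: starting in the state where the points xs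
  (= x_1..x_k, k = length xs) have been chosen and observed, the algorithm can end
  with outcome out.  All nondeterministic choices (optimal LP solution, basis and its
  ordering) are allowed.\<close>
inductive alg_run ::
  "(real^'n) set \<Rightarrow> (real^'n^'n) set \<Rightarrow> real^'n^'n \<Rightarrow> real^'n \<Rightarrow> real
     \<Rightarrow> (real^'n) list \<Rightarrow> (real^'n^'n) alg_outcome \<Rightarrow> bool"
  for S U0 Astar c eps where
  singleton:
    "\<lbrakk>length xs < CARD('n); Uset U0 Astar xs = {A}\<rbrakk>
       \<Longrightarrow> alg_run S U0 Astar c eps xs (Returns A)"
| take_opt:
    "\<lbrakk>length xs < CARD('n); \<not> (\<exists>A. Uset U0 Astar xs = {A});
      lp_opt c (S1 S (Uset U0 Astar xs)) xstar; xstar \<notin> span (set xs);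
      alg_run S U0 Astar c eps (xs @ [xstar]) out\<rbrakk>
       \<Longrightarrow> alg_run S U0 Astar c eps xs out"
| take_mix:
    "\<lbrakk>length xs < CARD('n); \<not> (\<exists>A. Uset U0 Astar xs = {A});
      lp_opt c (S1 S (Uset U0 Astar xs)) xstar; xstar \<in> span (set xs);
      basis_list_of (S1 S (Uset U0 Astar xs)) B;
      i < length B; B ! i \<notin> span (set xs); \<forall>j < i. B ! j \<in> span (set xs);
      alg_run S U0 Astar c eps (xs @ [(1 - eps) *\<^sub>R xstar + eps *\<^sub>R (B ! i)]) out\<rbrakk>
       \<Longrightarrow> alg_run S U0 Astar c eps xs out"
| impossible:
    "\<lbrakk>length xs < CARD('n); \<not> (\<exists>A. Uset U0 Astar xs = {A});
      lp_opt c (S1 S (Uset U0 Astar xs)) xstar; xstar \<in> span (set xs);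
      basis_list_of (S1 S (Uset U0 Astar xs)) B;
      \<forall>z \<in> set B. z \<in> span (set xs)\<rbrakk>
       \<Longrightarrow> alg_run S U0 Astar c eps xs Impossible"
| complete:
    "length xs = CARD('n)
       \<Longrightarrow> alg_run S U0 Astar c eps xs
             (Returns (colmat (map (\<lambda>x. Astar *v x) xs) ** matrix_inv (colmat xs)))"

end

theory Submission
  imports Defs
begin

lemma eq_on_span:
  fixes A B :: "real^'n^'n" and v :: "real^'n" and X :: "(real^'n) set"
  assumes "\<forall>x\<in>X. A *v x = B *v x" "v \<in> span X"
  shows "A *v v = B *v v"
  using linear_eq_on_span[OF matrix_vector_mul_linear matrix_vector_mul_linear] assms
  by blast

lemma Uset_mono_span:
  assumes "set zs \<subseteq> span (set xs)"
  shows "Uset U0 Astar xs \<subseteq> Uset U0 Astar zs"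
proof
  fix A assume A: "A \<in> Uset U0 Astar xs"
  have "\<forall>x\<in>set xs. A *v x = Astar *v x" using A unfolding Uset_def by (auto simp: in_set_conv_nth)
  then have "\<forall>z\<in>set zs. A *v z = Astar *v z" using assms eq_on_span by blast
  then show "A \<in> Uset U0 Astar zs" using A unfolding Uset_def by auto
qed

lemma S1_anti: "U \<subseteq> U' \<Longrightarrow> S1 S U' \<subseteq> S1 S U"
  unfolding S1_def by auto

lemma Astar_in: "Astar \<in> U0 \<Longrightarrow> Astar \<in> Uset U0 Astar xs"
  unfolding Uset_def by auto

lemma not_learnable_base:
  assumes sub: "S1 S (Uset U0 Astar xs) \<subseteq> span (set xs)"
    and ns: "\<not> (\<exists>A. Uset U0 Astar xs = {A})" and As: "Astar \<in> U0"
  shows "\<not> one_step_safe_learnable S U0 Astar"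
proof
  assume "one_step_safe_learnable S U0 Astar"
  then obtain zs where safe: "\<forall>k < length zs. zs ! k \<in> S \<and>
            (\<forall>A \<in> Uset U0 Astar (take k zs). A *v (zs ! k) \<in> S)"
    and sing: "\<exists>A. Uset U0 Astar zs = {A}" unfolding one_step_safe_learnable_def by blast
  have "k \<le> length zs \<Longrightarrow> set (take k zs) \<subseteq> span (set xs)" for k
  proof (induction k)
    case 0 then show ?case by simp
  next
    case (Suc k)
    then have IH: "set (take k zs) \<subseteq> span (set xs)" and kl: "k < length zs" by auto
    have "zs ! k \<in> S1 S (Uset U0 Astar (take k zs))" using safe kl unfolding S1_def by auto
    also have "\<dots> \<subseteq> S1 S (Uset U0 Astar xs)" by (rule S1_anti[OF Uset_mono_span[OF IH]])
    finally have "zs ! k \<in> span (set xs)" using sub by blast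
    then show ?case using IH kl by (simp add: take_Suc_conv_app_nth)
  qed
  from this[of "length zs"] have "Uset U0 Astar xs \<subseteq> Uset U0 Astar zs"
    by (intro Uset_mono_span) simp
  moreover have "Astar \<in> Uset U0 Astar xs" using Astar_in[OF As] .
  moreover obtain A0 where A0: "Uset U0 Astar zs = {A0}" using sing by blast
  ultimately have "Uset U0 Astar xs = {A0}" by auto
  then show False using ns by blast
qed

lemma impossible_imp:
  assumes "alg_run S U0 Astar c eps xs out" "out = Impossible" "Astar \<in> U0"
  shows "\<not> one_step_safe_learnable S U0 Astar"
  using assms
proof (induction rule: alg_run.induct)
  case (impossible xs xstar B)
  have "S1 S (Uset U0 Astar xs) \<subseteq> span (set B)"
    using impossible(5) span_superset unfolding basis_list_of_def by blast
  also have "\<dots> \<subseteq> span (set xs)"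
    by (rule span_minimal) (use impossible(6) in auto)
  finally show ?case using not_learnable_base[of S U0 Astar xs] impossible(2,8) by blast
next
  case take_opt then show ?case by blast
next
  case take_mix then show ?case by blast
qed simp_all

definition safe_list where
  "safe_list S U0 Astar xs \<longleftrightarrow> (\<forall>k < length xs. xs ! k \<in> S1 S (Uset U0 Astar (take k xs)))"

lemma safe_list_snoc:
  "safe_list S U0 Astar (xs @ [x]) \<longleftrightarrow> safe_list S U0 Astar xs \<and> x \<in> S1 S (Uset U0 Astar xs)"
  unfolding safe_list_def
  by (auto simp: nth_append less_Suc_eq)

lemma S1_convex:
  assumes "convex S" "x \<in> S1 S U" "y \<in> S1 S U" "0 \<le> u" "u \<le> 1"
  shows "(1 - u) *\<^sub>R x + u *\<^sub>R y \<in> S1 S U"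
proof -
  have "(1 - u) *\<^sub>R x + u *\<^sub>R y \<in> S"
    by (rule convexD[OF assms(1)]) (use assms in \<open>auto simp: S1_def\<close>)
  moreover have "A *v ((1 - u) *\<^sub>R x + u *\<^sub>R y) \<in> S" if "A \<in> U" for A
  proof -
    have "A *v ((1 - u) *\<^sub>R x + u *\<^sub>R y) = (1 - u) *\<^sub>R (A *v x) + u *\<^sub>R (A *v y)"
      by (simp add: matrix_vector_right_distrib matrix_vector_mult_scaleR)
    moreover have "A *v x \<in> S" "A *v y \<in> S" using assms that unfolding S1_def by auto
    ultimately show ?thesis
      using convexD[OF assms(1) \<open>A *v x \<in> S\<close> \<open>A *v y \<in> S\<close>, of "1 - u" u] assms(4,5) by simp
  qed
  ultimately show ?thesis unfolding S1_def by auto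
qed

lemma returns_imp:
  assumes "alg_run S U0 Astar c eps xs out" "out = Returns M" "Astar \<in> U0"
    "convex S" "0 < eps" "eps \<le> 1"
    "safe_list S U0 Astar xs" "distinct xs" "independent (set xs)"
  shows "one_step_safe_learnable S U0 Astar"
  using assms
proof (induction rule: alg_run.induct)
  case (singleton xs A)
  then show ?case unfolding one_step_safe_learnable_def safe_list_def S1_def by blast
next
  case (take_opt xs xstar out)
  have "xstar \<in> S1 S (Uset U0 Astar xs)" using take_opt(3) unfolding lp_opt_def by auto
  moreover have "xstar \<notin> set xs" using take_opt(4) span_superset by blast
  ultimately show ?case using take_opt by (auto simp: safe_list_snoc independent_insertI span_superset)
next
  case (take_mix xs xstar B i out)
  let ?y = "(1 - eps) *\<^sub>R xstar + eps *\<^sub>R (B ! i)"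
  have x1: "xstar \<in> S1 S (Uset U0 Astar xs)" using take_mix(3) unfolding lp_opt_def by auto
  have x2: "B ! i \<in> S1 S (Uset U0 Astar xs)" using take_mix(5,6) unfolding basis_list_of_def by auto
  have ys: "?y \<in> S1 S (Uset U0 Astar xs)" using S1_convex[OF _ x1 x2] take_mix by auto
  have yn: "?y \<notin> span (set xs)"
  proof
    assume "?y \<in> span (set xs)"
    then have "?y - (1 - eps) *\<^sub>R xstar \<in> span (set xs)"
      using take_mix(4) by (intro span_diff span_scale) auto
    then have "eps *\<^sub>R (B ! i) \<in> span (set xs)" by simp
    then have "(1/eps) *\<^sub>R (eps *\<^sub>R (B ! i)) \<in> span (set xs)" by (rule span_scale)
    then show False using take_mix(7) take_mix.prems by simp
  qed
  moreover have "?y \<notin> set xs" using yn span_superset by blast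
  ultimately show ?case using take_mix ys yn by (auto simp: safe_list_snoc independent_insertI span_superset)
next
  case (complete xs)
  have fin: "finite (set xs)" by simp
  have "card (set xs) = CARD('a)" using complete distinct_card by metis
  then have "card (set xs) = dim (UNIV :: (real^'a) set)" by simp
  then have sp: "UNIV \<subseteq> span (set xs)" using card_eq_dim[of "set xs" UNIV] complete fin by auto
  have "Uset U0 Astar xs = {Astar}"
  proof
    show "{Astar} \<subseteq> Uset U0 Astar xs" using Astar_in complete by auto
  next
    show "Uset U0 Astar xs \<subseteq> {Astar}"
    proof
      fix A assume A: "A \<in> Uset U0 Astar xs"
      have "\<forall>x\<in>set xs. A *v x = Astar *v x" using A unfolding Uset_def by (auto simp: in_set_conv_nth)
      then have "\<forall>v. A *v v = Astar *v v" using sp eq_on_span by blast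
      then show "A \<in> {Astar}" by (simp add: matrix_eq)
    qed
  qed
  then show ?case using complete unfolding one_step_safe_learnable_def safe_list_def S1_def by blast
qed auto

theorem theorem7:
  fixes S :: "(real^'n) set" and U0 :: "(real^'n^'n) set"
    and Astar :: "real^'n^'n" and c :: "real^'n" and eps :: real
    and out :: "(real^'n^'n) alg_outcome"
  assumes "polyhedron S" and "polyhedron U0" and "Astar \<in> U0"
    and "0 < eps" and "eps \<le> 1"
    and "alg_run S U0 Astar c eps [] out"
  shows "one_step_safe_learnable S U0 Astar \<longleftrightarrow> (\<exists>M. out = Returns M)"
proof (cases out)
  case (Returns M)
  have "one_step_safe_learnable S U0 Astar"
    using returns_imp[OF assms(6) Returns assms(3) polyhedron_imp_convex[OF assms(1)] assms(4,5)]
    by (simp add: safe_list_def independent_empty)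
  then show ?thesis using Returns by auto
next
  case Impossible
  then show ?thesis using impossible_imp[OF assms(6) Impossible assms(3)] by auto
qed

end
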